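(* Let $p$ be a prime and $\ell\ge1$. Let $\mathbb H\subseteq GL_n$ be a $\mathbb Q$-algebraic subgroup and let $\rho:\mathbb G\to\mathbb H$ be an isomorphism of $\mathbb Q$-algebraic groups. Let $\Gamma\le\mathbb G(\mathbb Q)$ be the image of $BS(1,p^\ell)$ under the standard embedding, i.e. $\Gamma=\left\{\begin{pmatrix}p^{\ell k}&r\\0&1\end{pmatrix}:k\in\mathbb Z,\ r\in\mathbb Z[1/p]\right\}$. Then $\rho(\Gamma)$ has the congruence subgroup property: every finite-index subgroup $K$ of $\rho(\Gamma)$ contains $\rho(\Gamma)(M)$ for some integer $M>1$ coprime to $p$.
   Context: $\mathbb G=\mathbb G_a\rtimes\mathbb G_m$ is the affine group, viewed as the $\mathbb Q$-algebraic subgroup of $GL_2$ consisting of matrices $\begin{pmatrix}x&y\\0&1\end{pmatrix}$ with $x$ invertible. For a subgroup $\Lambda\le GL_n(\mathbb Q)$ and an integer $M>0$ coprime to $p$, $\Lambda(M)$ denotes the set of $g\in\Lambda\cap GL_n(\mathbb Z[1/p])$ with $g\equiv\mathbf 1_n\pmod{M\mathbb Z[1/p]}$ entrywise, i.e. the intersection of $\Lambda$ with the kernel of reduction $GL_n(\mathbb Z[1/p])\to GL_n(\mathbb Z/M\mathbb Z)$. *)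

theory Defs
  imports "HOL-Analysis.Analysis" "HOL-Computational_Algebra.Primes"
begin

definition Zp_inv :: "nat \<Rightarrow> rat set" where
  "Zp_inv p = {q. \<exists>(a::int) (m::nat). q = of_int a / of_nat p ^ m}"

text \<open>Regular functions on the affine group G = Ga x| Gm, i.e. elements of
  Q[x, x^-1, y], evaluated at the point (x,y) (matrix [[x,y],[0,1]]), x nonzero.\<close>
definition regular_on_G :: "(rat \<Rightarrow> rat \<Rightarrow> rat) \<Rightarrow> bool" where
  "regular_on_G f \<longleftrightarrow> (\<exists>(N::nat) (c :: nat \<Rightarrow> nat \<Rightarrow> rat).
     \<forall>x y. x \<noteq> 0 \<longrightarrow>
       f x y = (\<Sum>i\<le>N. \<Sum>j\<le>2*N. c i j * x powi (int j - int N) * y ^ i))"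

definition regular_on_GL :: "(rat^'n^'n \<Rightarrow> rat) \<Rightarrow> bool" where
  "regular_on_GL g \<longleftrightarrow> (\<exists>(S :: ('n \<Rightarrow> 'n \<Rightarrow> nat) set) (c :: ('n \<Rightarrow> 'n \<Rightarrow> nat) \<Rightarrow> rat) (k::nat).
     finite S \<and> (\<forall>A. det A \<noteq> 0 \<longrightarrow>
       g A = (\<Sum>e\<in>S. c e * (\<Prod>i\<in>UNIV. \<Prod>j\<in>UNIV. (A$i$j) ^ (e i j))) / det A ^ k))"

text \<open>rho (given on points (x,y) of G) is an isomorphism of Q-algebraic groups from G
  onto a Q-algebraic subgroup H of GL_n (namely its image): a morphism of varieties
  G -> GL_n, a group homomorphism, with a regular left inverse defined on GL_n.\<close>
definition alg_group_embedding :: "(rat \<Rightarrow> rat \<Rightarrow> rat^'n^'n) \<Rightarrow> bool" where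
  "alg_group_embedding \<rho> \<longleftrightarrow>
     (\<forall>i j. regular_on_G (\<lambda>x y. \<rho> x y $ i $ j)) \<and>
     (\<forall>x y. x \<noteq> 0 \<longrightarrow> invertible (\<rho> x y)) \<and>
     (\<forall>x1 y1 x2 y2. x1 \<noteq> 0 \<longrightarrow> x2 \<noteq> 0 \<longrightarrow>
        \<rho> x1 y1 ** \<rho> x2 y2 = \<rho> (x1 * x2) (x1 * y2 + y1)) \<and>
     (\<exists>\<psi>1 \<psi>2. regular_on_GL \<psi>1 \<and> regular_on_GL \<psi>2 \<and>
        (\<forall>x y. x \<noteq> 0 \<longrightarrow> \<psi>1 (\<rho> x y) = x \<and> \<psi>2 (\<rho> x y) = y))"

definition rho_Gamma :: "(rat \<Rightarrow> rat \<Rightarrow> rat^'n^'n) \<Rightarrow> nat \<Rightarrow> nat \<Rightarrow> (rat^'n^'n) set" where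
  "rho_Gamma \<rho> p l = {\<rho> ((of_nat p ^ l) powi k) r | k r. r \<in> Zp_inv p}"

definition mat_subgroup :: "(rat^'n^'n) set \<Rightarrow> bool" where
  "mat_subgroup K \<longleftrightarrow> mat 1 \<in> K \<and> (\<forall>a\<in>K. \<forall>b\<in>K. a ** b \<in> K) \<and>
     (\<forall>a\<in>K. \<exists>b\<in>K. a ** b = mat 1 \<and> b ** a = mat 1)"

definition finite_index :: "(rat^'n^'n) set \<Rightarrow> (rat^'n^'n) set \<Rightarrow> bool" where
  "finite_index K L \<longleftrightarrow> finite {(\<lambda>k. g ** k) ` K | g. g \<in> L}"

definition GL_Zp :: "nat \<Rightarrow> (rat^'n^'n) set" where
  "GL_Zp p = {A. (\<forall>i j. A$i$j \<in> Zp_inv p) \<and>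
     (\<exists>B. (\<forall>i j. B$i$j \<in> Zp_inv p) \<and> A ** B = mat 1 \<and> B ** A = mat 1)}"

definition cong_sub :: "nat \<Rightarrow> (rat^'n^'n) set \<Rightarrow> int \<Rightarrow> (rat^'n^'n) set" where
  "cong_sub p \<Lambda> M = {g \<in> \<Lambda> \<inter> GL_Zp p.
     \<forall>i j. \<exists>r\<in>Zp_inv p. g$i$j - (mat 1 :: rat^'n^'n)$i$j = of_int M * r}"

end

theory Submission
  imports Defs "HOL-Number_Theory.Cong"
begin


lemma Zp_int[simp]: "of_int a \<in> Zp_inv p"
  unfolding Zp_inv_def by (rule CollectI, rule exI[of _ a], rule exI[of _ 0]) simp
lemma Zp_nat[simp]: "of_nat a \<in> Zp_inv p" using Zp_int[of "int a" p] by simp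
lemma Zp_0[simp]: "0 \<in> Zp_inv p" using Zp_int[of 0] by simp
lemma Zp_1[simp]: "1 \<in> Zp_inv p" using Zp_int[of 1] by simp

lemma Zp_add: assumes "p > 0" "a \<in> Zp_inv p" "b \<in> Zp_inv p" shows "a + b \<in> Zp_inv p"
proof -
  from assms obtain a1 m1 b1 m2 where a: "a = of_int a1 / of_nat p ^ m1" and b: "b = of_int b1 / of_nat p ^ m2"
    unfolding Zp_inv_def by auto
  have "a + b = of_int (a1 * int p ^ m2 + b1 * int p ^ m1) / of_nat p ^ (m1 + m2)"
    using assms(1) by (simp add: a b field_simps power_add)
  thus ?thesis unfolding Zp_inv_def by blast
qed

lemma Zp_mult: assumes "p > 0" "a \<in> Zp_inv p" "b \<in> Zp_inv p" shows "a * b \<in> Zp_inv p"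
proof -
  from assms obtain a1 m1 b1 m2 where a: "a = of_int a1 / of_nat p ^ m1" and b: "b = of_int b1 / of_nat p ^ m2"
    unfolding Zp_inv_def by auto
  have "a * b = of_int (a1 * b1) / of_nat p ^ (m1 + m2)"
    using assms(1) by (simp add: a b field_simps power_add)
  thus ?thesis unfolding Zp_inv_def by blast
qed

lemma Zp_uminus: assumes "a \<in> Zp_inv p" shows "- a \<in> Zp_inv p"
proof -
  from assms obtain a1 m1 where a: "a = of_int a1 / of_nat p ^ m1"
    unfolding Zp_inv_def by auto
  have "- a = of_int (- a1) / of_nat p ^ m1" by (simp add: a)
  thus ?thesis unfolding Zp_inv_def by blast
qed

lemma Zp_diff: assumes "p > 0" "a \<in> Zp_inv p" "b \<in> Zp_inv p" shows "a - b \<in> Zp_inv p"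
  using Zp_add[OF assms(1,2) Zp_uminus[OF assms(3)]] by simp

lemma Zp_divp: assumes "a \<in> Zp_inv p" shows "a / of_nat p ^ m \<in> Zp_inv p"
proof -
  from assms obtain a1 m1 where a: "a = of_int a1 / of_nat p ^ m1"
    unfolding Zp_inv_def by auto
  have "a / of_nat p ^ m = of_int a1 / of_nat p ^ (m1 + m)" by (simp add: a power_add)
  thus ?thesis unfolding Zp_inv_def by blast
qed

lemma Zp_power: assumes "p > 0" "a \<in> Zp_inv p" shows "a ^ n \<in> Zp_inv p"
  by (induction n) (auto intro: Zp_mult assms)

lemma Zp_sum: assumes "p > 0" "\<forall>x\<in>A. f x \<in> Zp_inv p" shows "sum f A \<in> Zp_inv p"
proof (cases "finite A")
  case True thus ?thesis using assms(2) by (induction rule: finite_induct) (auto intro: Zp_add assms(1))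
qed simp

lemma Zp_prod: assumes "p > 0" "\<forall>x\<in>A. f x \<in> Zp_inv p" shows "prod f A \<in> Zp_inv p"
proof (cases "finite A")
  case True thus ?thesis using assms(2) by (induction rule: finite_induct) (auto intro: Zp_mult assms(1))
qed simp

lemma Zp_powi: "(of_nat p ^ l :: rat) powi k \<in> Zp_inv p"
proof (cases "k \<ge> 0")
  case True
  hence "(of_nat p ^ l :: rat) powi k = of_nat (p ^ (l * nat k))"
    by (simp add: power_int_def power_mult)
  thus ?thesis by (metis Zp_nat)
next
  case False
  hence "(of_nat p ^ l :: rat) powi k = of_int 1 / of_nat p ^ (l * nat (-k))"
    by (simp add: power_int_def power_mult power_inverse divide_inverse)
  thus ?thesis unfolding Zp_inv_def by blast
qed

definition cg :: "nat \<Rightarrow> int \<Rightarrow> rat \<Rightarrow> rat \<Rightarrow> bool" where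
  "cg p M a b \<longleftrightarrow> a \<in> Zp_inv p \<and> b \<in> Zp_inv p \<and> (\<exists>r\<in>Zp_inv p. a - b = of_int M * r)"

lemma cg_refl: "a \<in> Zp_inv p \<Longrightarrow> cg p M a a"
  unfolding cg_def by (auto intro: bexI[of _ 0])

lemma cg_add: assumes "p > 0" "cg p M a b" "cg p M c d" shows "cg p M (a + c) (b + d)"
proof -
  from assms obtain r s where r: "r \<in> Zp_inv p" "a - b = of_int M * r" and s: "s \<in> Zp_inv p" "c - d = of_int M * s"
    unfolding cg_def by auto
  have "a + c - (b + d) = of_int M * (r + s)" using r s by (simp add: algebra_simps)
  thus ?thesis using assms r s unfolding cg_def by (auto intro!: Zp_add)
qed

lemma cg_mult: assumes "p > 0" "cg p M a b" "cg p M c d" shows "cg p M (a * c) (b * d)"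
proof -
  from assms obtain r s where r: "r \<in> Zp_inv p" "a - b = of_int M * r" and s: "s \<in> Zp_inv p" "c - d = of_int M * s"
    unfolding cg_def by auto
  have "a * c - (b * d) = of_int M * (a * s + r * d)"
  proof -
    have "a * c - b * d = a * (c - d) + (a - b) * d" by (simp add: algebra_simps)
    thus ?thesis using r s by (simp add: algebra_simps)
  qed
  moreover have "a * s + r * d \<in> Zp_inv p" using assms r s unfolding cg_def by (auto intro!: Zp_add Zp_mult)
  ultimately show ?thesis using assms unfolding cg_def by (auto intro!: Zp_mult)
qed

lemma cg_sum: assumes "p > 0" "\<forall>x\<in>A. cg p M (f x) (g x)" shows "cg p M (sum f A) (sum g A)"
proof (cases "finite A")
  case True thus ?thesis using assms(2) by (induction rule: finite_induct) (auto intro: cg_add assms(1) cg_refl)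
qed (simp add: cg_refl)

lemma cg_prod: assumes "p > 0" "\<forall>x\<in>A. cg p M (f x) (g x)" shows "cg p M (prod f A) (prod g A)"
proof (cases "finite A")
  case True thus ?thesis using assms(2) by (induction rule: finite_induct) (auto intro: cg_mult assms(1) cg_refl)
qed (simp add: cg_refl)

lemma cg_power: assumes "p > 0" "cg p M a b" shows "cg p M (a ^ n) (b ^ n)"
  by (induction n) (auto intro: cg_mult assms cg_refl)

lemma det_cg: assumes "p > 0" "\<forall>i j. cg p M (A$i$j) (B$i$j)" shows "cg p M (det A) (det B)"
  unfolding det_def using assms
  by (auto intro!: cg_sum cg_mult cg_prod cg_refl)

lemma poly_cg: assumes "p > 0" "\<forall>i j. cg p M (A$i$j) (B$i$j)" "\<forall>e\<in>S. c e \<in> Zp_inv p"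
  shows "cg p M (\<Sum>e\<in>S. c e * (\<Prod>i\<in>UNIV. \<Prod>j\<in>UNIV. (A$i$j) ^ (e i j)))
                 (\<Sum>e\<in>S. c e * (\<Prod>i\<in>UNIV. \<Prod>j\<in>UNIV. (B$i$j) ^ (e i j)))"
  using assms by (auto intro!: cg_sum cg_mult cg_prod cg_refl cg_power)



lemma decomp_nat: assumes "prime (p::nat)" "n > 0" shows "\<exists>a b. n = p ^ a * b \<and> coprime b p \<and> b > 0"
  using assms(2)
proof (induction n rule: less_induct)
  case (less n)
  show ?case
  proof (cases "p dvd n")
    case True
    then obtain m where m: "n = p * m" by auto
    have p1: "p > 1" using assms(1) prime_gt_1_nat by blast
    have "m > 0" using m less.prems by (cases m) auto
    moreover have "m < n" using m p1 \<open>m > 0\<close> by simp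
    ultimately obtain a b where "m = p ^ a * b" "coprime b p" "b > 0" using less.IH by blast
    thus ?thesis using m by (intro exI[of _ "Suc a"] exI[of _ b]) auto
  next
    case False
    hence "coprime p n" using prime_imp_coprime assms(1) by blast
    thus ?thesis using less.prems by (intro exI[of _ 0] exI[of _ n]) (auto simp: coprime_commute)
  qed
qed

lemma denom_rat: assumes "prime p" shows "\<exists>D::nat. D > 0 \<and> coprime D p \<and> of_nat D * (q::rat) \<in> Zp_inv p"
proof -
  obtain a b where ab: "quotient_of q = (a, b)" by (cases "quotient_of q")
  have b: "b > 0" using quotient_of_denom_pos[OF ab] .
  have q: "q = of_int a / of_int b" using quotient_of_div[OF ab] .
  obtain m D where mD: "nat b = p ^ m * D" "coprime D p" "D > 0" using decomp_nat[OF assms, of "nat b"] b by auto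
  have "of_int b = (of_nat (nat b) :: rat)" using b by simp
  also have "\<dots> = of_nat p ^ m * of_nat D" using mD by simp
  finally have bb: "(of_int b :: rat) = of_nat p ^ m * of_nat D" .
  have pp: "(of_nat p :: rat) ^ m \<noteq> 0" using assms prime_gt_0_nat by auto
  have "of_nat D * q = of_int a / of_nat p ^ m" using mD(3) pp by (simp add: q bb field_simps)
  thus ?thesis using mD unfolding Zp_inv_def by blast
qed

lemma denom_set: assumes "prime p" "finite S"
  shows "\<exists>D::nat. D > 0 \<and> coprime D p \<and> (\<forall>e\<in>S. of_nat D * (c e :: rat) \<in> Zp_inv p)"
  using assms(2)
proof (induction rule: finite_induct)
  case empty show ?case by (intro exI[of _ 1]) auto
next
  case (insert x F)
  obtain D1 where D1: "D1 > 0" "coprime D1 p" "\<forall>e\<in>F. of_nat D1 * c e \<in> Zp_inv p" using insert.IH by blast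
  obtain D2 where D2: "D2 > 0" "coprime D2 p" "of_nat D2 * c x \<in> Zp_inv p" using denom_rat[OF assms(1)] by blast
  have p0: "p > 0" using assms prime_gt_0_nat by auto
  have "of_nat (D1 * D2) * c e \<in> Zp_inv p" if "e \<in> insert x F" for e
  proof (cases "e = x")
    case True
    have "of_nat (D1 * D2) * c e = of_nat D1 * (of_nat D2 * c x)" using True by simp
    thus ?thesis by (metis Zp_mult[OF p0] Zp_nat D2(3))
  next
    case False
    hence "e \<in> F" using that by auto
    have "of_nat (D1 * D2) * c e = of_nat D2 * (of_nat D1 * c e)" by simp
    thus ?thesis by (metis Zp_mult[OF p0] Zp_nat D1(3) \<open>e \<in> F\<close>)
  qed
  thus ?case using D1 D2 by (intro exI[of _ "D1 * D2"]) auto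
qed

lemma powdiv: fixes P :: int assumes "P \<ge> 2" "F \<ge> 1" "(P ^ F - 1) dvd (P ^ j - 1)" shows "F dvd j"
proof -
  define t where "t = j mod F"
  have j: "j = F * (j div F) + t" unfolding t_def by simp
  have c1: "[P ^ F = 1] (mod P ^ F - 1)" by (simp add: cong_iff_dvd_diff)
  have c2: "[(P ^ F) ^ (j div F) = 1] (mod P ^ F - 1)" using cong_pow[OF c1] by simp
  have "P ^ j = (P ^ F) ^ (j div F) * P ^ t" by (subst j) (simp add: power_add power_mult)
  hence c3: "[P ^ j = P ^ t] (mod P ^ F - 1)" using cong_mult[OF c2 cong_refl[of "P ^ t"]] by simp
  have c4: "[P ^ j = 1] (mod P ^ F - 1)" using assms(3) by (simp add: cong_iff_dvd_diff)
  have "[P ^ t = 1] (mod P ^ F - 1)" using c3 c4 by (metis cong_sym cong_trans)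
  hence d: "(P ^ F - 1) dvd (P ^ t - 1)" by (simp add: cong_iff_dvd_diff)
  have tF: "t < F" unfolding t_def using assms(2) by simp
  have lt: "P ^ t < P ^ F" using tF assms(1) by (intro power_strict_increasing) auto
  have ge: "P ^ t \<ge> 1" using assms(1) by simp
  have "P ^ t - 1 = 0"
  proof (rule ccontr)
    assume "P ^ t - 1 \<noteq> 0"
    from dvd_imp_le_int[OF this d] lt ge show False by simp
  qed
  hence "t = 0" using assms(1) by (metis diff_eq_eq one_less_power add_0 less_le not_gr0 order_less_le_trans one_less_numeral_iff semiring_norm(76))
  thus ?thesis unfolding t_def by auto
qed



lemma inv_cancel: fixes A :: "rat^'n^'n" assumes "invertible A" "A ** a = A ** b" shows "a = b"
proof -
  obtain B where B: "B ** A = mat 1" using assms(1) unfolding invertible_def by blast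
  have "a = (B ** A) ** a" using B by simp
  also have "\<dots> = B ** (A ** a)" by (simp only: matrix_mul_assoc)
  also have "\<dots> = B ** (A ** b)" using assms(2) by simp
  also have "\<dots> = (B ** A) ** b" by (simp only: matrix_mul_assoc)
  also have "\<dots> = b" using B by simp
  finally show ?thesis .
qed

lemma pigeon:
  fixes f :: "nat \<Rightarrow> rat^'n^'n"
  assumes K: "mat_subgroup K" and fi: "finite_index K L" and fL: "\<forall>i. f i \<in> L"
    and hom: "\<forall>i j. f (i+j) = f i ** f j" and inv: "\<forall>i. invertible (f i)"
  shows "f (fact (card {(\<lambda>k. g ** k) ` K | g. g \<in> L})) \<in> K"
proof -
  define C where "C = {(\<lambda>k. g ** k) ` K | g. g \<in> L}"
  define N where "N = card C"
  define h where "h i = (\<lambda>k. f i ** k) ` K" for i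
  have fC: "finite C" using fi unfolding finite_index_def C_def .
  have hC: "h ` {0..N} \<subseteq> C" using fL unfolding h_def C_def by auto
  have "\<not> inj_on h {0..N}"
  proof
    assume "inj_on h {0..N}"
    from card_inj_on_le[OF this hC fC] show False unfolding N_def by simp
  qed
  then obtain i j where ij: "i \<le> N" "j \<le> N" "i \<noteq> j" "h i = h j" unfolding inj_on_def by auto
  have "\<exists>i j. i < j \<and> j \<le> N \<and> h i = h j"
  proof (cases "i < j")
    case True thus ?thesis using ij by blast
  next
    case False thus ?thesis using ij by (intro exI[of _ j] exI[of _ i]) auto
  qed
  then obtain i j where ij: "i < j" "j \<le> N" "h i = h j" by blast
  have one: "mat 1 \<in> K" using K unfolding mat_subgroup_def by blast
  have "f j \<in> h j" unfolding h_def using one by (auto intro!: image_eqI[of _ _ "mat 1"])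
  hence "f j \<in> h i" using ij by simp
  then obtain k where k: "k \<in> K" "f j = f i ** k" unfolding h_def by auto
  have "f (i + (j - i)) = f i ** f (j - i)" using hom by blast
  moreover have "i + (j - i) = j" using ij by simp
  ultimately have "f j = f i ** f (j - i)" by simp
  hence "f i ** f (j - i) = f i ** k" using k(2) by metis
  hence "f (j - i) = k" using inv_cancel inv by blast
  hence fd: "f (j - i) \<in> K" using k(1) by simp
  define d where "d = j - i"
  have d: "1 \<le> d" "d \<le> N" using ij unfolding d_def by auto
  have f0: "f 0 = mat 1"
  proof -
    have "f (0 + 0) = f 0 ** f 0" using hom by blast
    hence "f 0 ** f 0 = f 0 ** mat 1" by simp
    thus ?thesis using inv_cancel inv by blast
  qed
  have all: "f (d * s) \<in> K" for s
  proof (induction s)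
    case 0 thus ?case using f0 one by simp
  next
    case (Suc s)
    have "f (d * s + d) = f (d * s) ** f d" using hom by blast
    hence "f (d * Suc s) = f (d * s) ** f d" by (simp add: add.commute)
    moreover have "f d \<in> K" using fd unfolding d_def .
    ultimately show ?case using Suc K unfolding mat_subgroup_def by metis
  qed
  obtain s where "fact N = d * s" using dvd_fact[OF d] by blast
  hence "f (fact N) \<in> K" using all by simp
  thus ?thesis unfolding N_def C_def by simp
qed



lemma rho_hom: "alg_group_embedding \<rho> \<Longrightarrow> x1 \<noteq> 0 \<Longrightarrow> x2 \<noteq> 0 \<Longrightarrow> \<rho> x1 y1 ** \<rho> x2 y2 = \<rho> (x1*x2) (x1*y2+y1)"
  unfolding alg_group_embedding_def by blast
lemma rho_one: assumes E: "alg_group_embedding \<rho>" shows "\<rho> 1 0 = mat 1"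
proof -
  have hom: "\<rho> 1 0 ** \<rho> 1 0 = \<rho> (1 * 1) (1 * 0 + 0)" using rho_hom[OF E] by simp
  hence "\<rho> 1 0 ** \<rho> 1 0 = \<rho> 1 0 ** mat 1" by simp
  moreover have "invertible (\<rho> 1 0)" using E unfolding alg_group_embedding_def by simp
  ultimately show ?thesis using inv_cancel by blast
qed

lemma key: assumes "prime p" "(of_nat p ^ l :: rat) powi k - 1 = of_int M0 * s" "s \<in> Zp_inv p"
  "coprime M0 (int p)"
  shows "M0 dvd (int p ^ l) ^ nat \<bar>k\<bar> - 1"
proof -
  define j where "j = nat \<bar>k\<bar>"
  define X :: rat where "X = of_int ((int p ^ l) ^ j)"
  have p0: "p > 0" using assms(1) prime_gt_0_nat by blast
  have X0: "X \<noteq> 0" unfolding X_def using p0 by simp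
  have XZ: "X \<in> Zp_inv p" unfolding X_def by (rule Zp_int)
  have "\<exists>s'\<in>Zp_inv p. X - 1 = of_int M0 * s'"
  proof (cases "k \<ge> 0")
    case True
    hence "(of_nat p ^ l :: rat) powi k = X" unfolding X_def j_def by (simp add: power_int_def)
    thus ?thesis using assms(2,3) by auto
  next
    case False
    hence "(of_nat p ^ l :: rat) powi k = inverse X" unfolding X_def j_def
      by (simp add: power_int_def power_inverse)
    hence e: "inverse X - 1 = of_int M0 * s" using assms(2) by simp
    have "X - 1 = - (inverse X - 1) * X" using X0 by (simp add: field_simps)
    also have "\<dots> = of_int M0 * (- s * X)" using e by simp
    finally show ?thesis using Zp_mult[OF p0 Zp_uminus[OF assms(3)] XZ] by blast
  qed
  then obtain s' where s': "s' \<in> Zp_inv p" "X - 1 = of_int M0 * s'" by blast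
  then obtain a m where am: "s' = of_int a / of_nat p ^ m" unfolding Zp_inv_def by auto
  have pm: "(of_nat p :: rat) ^ m \<noteq> 0" using p0 by simp
  have "(X - 1) * of_nat p ^ m = of_int M0 * of_int a" using s'(2) am pm by simp
  hence "of_int (((int p ^ l) ^ j - 1) * int p ^ m) = (of_int (M0 * a) :: rat)" unfolding X_def by simp
  hence "((int p ^ l) ^ j - 1) * int p ^ m = M0 * a" using of_int_eq_iff by blast
  hence "M0 dvd ((int p ^ l) ^ j - 1) * int p ^ m" by (metis dvd_triv_left)
  moreover have "coprime M0 (int p ^ m)" using assms(4) by simp
  ultimately show ?thesis using coprime_dvd_mult_left_iff unfolding j_def by blast
qed

lemma reg_step:
  fixes g :: "rat^'n^'n"
  assumes p0: "p > 0" and cD: "\<forall>e\<in>S. of_nat D * c e \<in> Zp_inv p" and D0: "D > 0"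
  and form: "\<forall>A. det A \<noteq> 0 \<longrightarrow> \<psi> A = (\<Sum>e\<in>S. c e * (\<Prod>i\<in>UNIV. \<Prod>j\<in>UNIV. (A$i$j) ^ (e i j))) / det A ^ k"
  and cgA: "\<forall>i j. cg p (int D * M0) (g$i$j) ((mat 1::rat^'n^'n)$i$j)"
  and dg: "det g \<noteq> 0" and z: "z \<in> Zp_inv p" and psig: "\<psi> g = z"
  shows "\<exists>s\<in>Zp_inv p. z - \<psi> (mat 1) = of_int M0 * s"
proof -
  define P where "P A = (\<Sum>e\<in>S. c e * (\<Prod>i\<in>UNIV. \<Prod>j\<in>UNIV. ((A::rat^'n^'n)$i$j) ^ (e i j)))" for A
  have PI: "\<psi> (mat 1) = P (mat 1)" using form unfolding P_def by simp
  have "\<psi> g = P g / det g ^ k" using form dg unfolding P_def by blast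
  hence "z = P g / det g ^ k" using psig by simp
  hence Pg: "z * det g ^ k = P g" using dg by (simp add: field_simps)
  have c1: "cg p (int D * M0) (\<Sum>e\<in>S. (of_nat D * c e) * (\<Prod>i\<in>UNIV. \<Prod>j\<in>UNIV. (g$i$j) ^ (e i j)))
                 (\<Sum>e\<in>S. (of_nat D * c e) * (\<Prod>i\<in>UNIV. \<Prod>j\<in>UNIV. ((mat 1::rat^'n^'n)$i$j) ^ (e i j)))"
    by (rule poly_cg[OF p0 cgA cD])
  have "(\<Sum>e\<in>S. (of_nat D * c e) * (\<Prod>i\<in>UNIV. \<Prod>j\<in>UNIV. ((A::rat^'n^'n)$i$j) ^ (e i j))) = of_nat D * P A" for A
    unfolding P_def by (simp add: sum_distrib_left mult.assoc)
  hence c1': "cg p (int D * M0) (of_nat D * P g) (of_nat D * P (mat 1))" using c1 by simp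
  then obtain r where r: "r \<in> Zp_inv p" "of_nat D * P g - of_nat D * P (mat 1) = of_int (int D * M0) * r"
    unfolding cg_def by blast
  have Dq: "(of_nat D :: rat) \<noteq> 0" using D0 by simp
  have r': "P g - P (mat 1) = of_int M0 * r"
  proof -
    have "of_nat D * (P g - P (mat 1)) = of_nat D * (of_int M0 * r)" using r(2) by (simp add: algebra_simps)
    thus ?thesis using Dq by simp
  qed
  have "cg p (int D * M0) (det g) (det (mat 1::rat^'n^'n))" by (rule det_cg[OF p0 cgA])
  hence "cg p (int D * M0) (det g ^ k) 1" using cg_power[OF p0] by fastforce
  then obtain t where t: "t \<in> Zp_inv p" "det g ^ k - 1 = of_int (int D * M0) * t" unfolding cg_def by blast
  have "z - P (mat 1) = (z * det g ^ k - P (mat 1)) - z * (det g ^ k - 1)" by (simp add: algebra_simps)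
  also have "\<dots> = of_int M0 * r - z * (of_int (int D * M0) * t)" using Pg r' t by simp
  also have "\<dots> = of_int M0 * (r - z * of_nat D * t)" by (simp add: algebra_simps)
  finally have "z - \<psi> (mat 1) = of_int M0 * (r - z * of_nat D * t)" using PI by simp
  moreover have "r - z * of_nat D * t \<in> Zp_inv p" using r t z p0 by (auto intro!: Zp_diff Zp_mult)
  ultimately show ?thesis by blast
qed

lemma int_ge1_mult: "(1::int) \<le> a \<Longrightarrow> 1 \<le> b \<Longrightarrow> 1 \<le> a * b"
  using mult_mono[of 1 a 1 b] by simp



theorem proposition1p6:
  fixes p l :: nat and \<rho> :: "rat \<Rightarrow> rat \<Rightarrow> rat^'n^'n"
  assumes "prime p" and "l \<ge> 1" and "alg_group_embedding \<rho>"
  shows "\<forall>K. K \<subseteq> rho_Gamma \<rho> p l \<and> mat_subgroup K \<and> finite_index K (rho_Gamma \<rho> p l) \<longrightarrow>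
           (\<exists>M::int. M > 1 \<and> coprime M (int p) \<and> cong_sub p (rho_Gamma \<rho> p l) M \<subseteq> K)"
proof (intro allI impI)
  fix K assume H: "K \<subseteq> rho_Gamma \<rho> p l \<and> mat_subgroup K \<and> finite_index K (rho_Gamma \<rho> p l)"
  define L where "L = rho_Gamma \<rho> p l"
  have KL: "K \<subseteq> L" and Ks: "mat_subgroup K" and fi: "finite_index K L" using H L_def by auto
  have Kone: "mat 1 \<in> K" using Ks unfolding mat_subgroup_def by blast
  have Kmul: "\<And>a b. a \<in> K \<Longrightarrow> b \<in> K \<Longrightarrow> a ** b \<in> K" using Ks unfolding mat_subgroup_def by blast
  have Kinv: "\<And>a. a \<in> K \<Longrightarrow> \<exists>b\<in>K. a ** b = mat 1" using Ks unfolding mat_subgroup_def by blast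
  have p1: "p > 1" using assms(1) prime_gt_1_nat by blast
  hence p0: "p > 0" by simp
  define q :: rat where "q = of_nat p ^ l"
  have q0: "q \<noteq> 0" using p0 q_def by simp
  have hom: "\<And>x1 x2 y1 y2. x1 \<noteq> 0 \<Longrightarrow> x2 \<noteq> 0 \<Longrightarrow> \<rho> x1 y1 ** \<rho> x2 y2 = \<rho> (x1*x2) (x1*y2+y1)"
    using rho_hom[OF assms(3)] by blast
  have inv: "\<And>x y. x \<noteq> 0 \<Longrightarrow> invertible (\<rho> x y)" using assms(3) unfolding alg_group_embedding_def by blast
  have one: "\<rho> 1 0 = mat 1" using rho_one[OF assms(3)] .
  have inL: "\<And>k r. r \<in> Zp_inv p \<Longrightarrow> \<rho> (q powi k) r \<in> L" unfolding L_def rho_Gamma_def q_def by blast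
  define N where "N = card {(\<lambda>k. g ** k) ` K | g. g \<in> L}"
  define F :: nat where "F = fact N"
  have F1: "F \<ge> 1" unfolding F_def by simp
  have A: "\<rho> 1 (of_nat F * r) \<in> K" if r: "r \<in> Zp_inv p" for r
  proof -
    have "(\<lambda>i::nat. \<rho> 1 (of_nat i * r)) (fact (card {(\<lambda>k. g ** k) ` K | g. g \<in> L})) \<in> K"
    proof (rule pigeon[OF Ks fi])
      show "\<forall>i. \<rho> 1 (of_nat i * r) \<in> L"
      proof
        fix i :: nat
        have "of_nat i * r \<in> Zp_inv p" using r p0 by (auto intro: Zp_mult)
        from inL[OF this, of 0] show "\<rho> 1 (of_nat i * r) \<in> L" by simp
      qed
      show "\<forall>i j. \<rho> 1 (of_nat (i + j) * r) = \<rho> 1 (of_nat i * r) ** \<rho> 1 (of_nat j * r)"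
        using hom[of 1 1] by (simp add: algebra_simps)
      show "\<forall>i. invertible (\<rho> 1 (of_nat i * r))" using inv by simp
    qed
    thus ?thesis unfolding F_def N_def by simp
  qed
  obtain a F' where aF: "F = p ^ a * F'" "coprime F' p" "F' > 0" using decomp_nat[OF assms(1), of F] F1 by auto
  have A': "\<rho> 1 (of_nat F' * r) \<in> K" if r: "r \<in> Zp_inv p" for r
  proof -
    have "of_nat F * (r / of_nat p ^ a) = of_nat F' * r" using p0 aF(1) by simp
    thus ?thesis using A[OF Zp_divp[OF r, of a]] by simp
  qed
  have B: "\<rho> (q ^ F) 0 \<in> K"
  proof -
    have "(\<lambda>i::nat. \<rho> (q ^ i) 0) (fact (card {(\<lambda>k. g ** k) ` K | g. g \<in> L})) \<in> K"
    proof (rule pigeon[OF Ks fi])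
      show "\<forall>i. \<rho> (q ^ i) 0 \<in> L"
      proof
        fix i :: nat
        from inL[OF Zp_0, of "int i"] show "\<rho> (q ^ i) 0 \<in> L" by simp
      qed
      show "\<forall>i j. \<rho> (q ^ (i + j)) 0 = \<rho> (q ^ i) 0 ** \<rho> (q ^ j) 0"
        using hom q0 by (simp add: power_add)
      show "\<forall>i. invertible (\<rho> (q ^ i) 0)" using inv q0 by simp
    qed
    thus ?thesis unfolding F_def N_def by simp
  qed
  have pw: "\<rho> (v ^ n) 0 \<in> K" if "v \<noteq> 0" "\<rho> v 0 \<in> K" for v n
  proof (induction n)
    case 0 thus ?case using one Kone by simp
  next
    case (Suc n)
    have "\<rho> (v ^ n) 0 ** \<rho> v 0 = \<rho> (v ^ Suc n) 0" using hom[of "v ^ n" v] that(1) by (simp add: mult.commute)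
    thus ?case using Kmul[OF Suc that(2)] by simp
  qed
  define u where "u = q ^ F"
  have u0: "u \<noteq> 0" using q0 u_def by simp
  have uinv: "\<rho> (inverse u) 0 \<in> K"
  proof -
    obtain b where b: "b \<in> K" "\<rho> u 0 ** b = mat 1" using Kinv[OF B[folded u_def]] by blast
    have "\<rho> u 0 ** \<rho> (inverse u) 0 = mat 1" using hom[of u "inverse u"] u0 one by simp
    hence "b = \<rho> (inverse u) 0" using b(2) inv_cancel[OF inv[OF u0]] by metis
    thus ?thesis using b(1) by simp
  qed
  have Bpow: "\<rho> (u powi s) 0 \<in> K" for s
  proof (cases "s \<ge> 0")
    case True thus ?thesis using pw[OF u0 B[folded u_def]] by (simp add: power_int_def)
  next
    case False thus ?thesis using pw[OF _ uinv] u0 by (simp add: power_int_def)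
  qed
  obtain \<psi>1 \<psi>2 where psi: "regular_on_GL \<psi>1" "regular_on_GL \<psi>2"
    "\<forall>x y. x \<noteq> 0 \<longrightarrow> \<psi>1 (\<rho> x y) = x \<and> \<psi>2 (\<rho> x y) = y"
    using assms(3) unfolding alg_group_embedding_def by (elim conjE exE) blast
  obtain S1 c1 k1 where R1: "finite S1" "\<forall>A. det A \<noteq> 0 \<longrightarrow>
       \<psi>1 A = (\<Sum>e\<in>S1. c1 e * (\<Prod>i\<in>UNIV. \<Prod>j\<in>UNIV. (A$i$j) ^ (e i j))) / det A ^ k1"
    using psi(1) unfolding regular_on_GL_def by blast
  obtain S2 c2 k2 where R2: "finite S2" "\<forall>A. det A \<noteq> 0 \<longrightarrow>
       \<psi>2 A = (\<Sum>e\<in>S2. c2 e * (\<Prod>i\<in>UNIV. \<Prod>j\<in>UNIV. (A$i$j) ^ (e i j))) / det A ^ k2"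
    using psi(2) unfolding regular_on_GL_def by blast
  obtain D1 where D1: "D1 > 0" "coprime D1 p" "\<forall>e\<in>S1. of_nat D1 * c1 e \<in> Zp_inv p"
    using denom_set[OF assms(1) R1(1)] by blast
  obtain D2 where D2: "D2 > 0" "coprime D2 p" "\<forall>e\<in>S2. of_nat D2 * c2 e \<in> Zp_inv p"
    using denom_set[OF assms(1) R2(1)] by blast
  define D where "D = D1 * D2"
  have D0: "D > 0" using D1 D2 D_def by simp
  have cD1: "\<forall>e\<in>S1. of_nat D * c1 e \<in> Zp_inv p"
  proof
    fix e assume "e \<in> S1"
    hence "of_nat D2 * (of_nat D1 * c1 e) \<in> Zp_inv p" using D1(3) Zp_mult[OF p0] Zp_nat by blast
    thus "of_nat D * c1 e \<in> Zp_inv p" unfolding D_def by (simp add: mult.commute mult.left_commute)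
  qed
  have cD2: "\<forall>e\<in>S2. of_nat D * c2 e \<in> Zp_inv p"
  proof
    fix e assume "e \<in> S2"
    hence "of_nat D1 * (of_nat D2 * c2 e) \<in> Zp_inv p" using D2(3) Zp_mult[OF p0] Zp_nat by blast
    thus "of_nat D * c2 e \<in> Zp_inv p" unfolding D_def by (simp add: mult.assoc)
  qed
  have cDp: "coprime D p" using D1 D2 D_def by simp
  define P :: int where "P = int p ^ l"
  have P2: "P \<ge> 2"
  proof -
    have "p ^ 1 \<le> p ^ l" using assms(2) p1 by (intro power_increasing) auto
    hence "2 \<le> p ^ l" using p1 by simp
    hence "int 2 \<le> int (p ^ l)" by (simp only: of_nat_le_iff)
    thus ?thesis unfolding P_def by simp
  qed
  have PF: "P ^ F \<ge> 2"
  proof -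
    have "P ^ 1 \<le> P ^ F" using F1 P2 by (intro power_increasing) auto
    thus ?thesis using P2 by simp
  qed
  define M0 :: int where "M0 = int F' * (P ^ F - 1) * (int p + 1)"
  define M :: int where "M = int D * M0"
  have cop1: "coprime (P ^ F - 1) (int p)"
  proof (rule coprimeI)
    fix c assume c: "c dvd P ^ F - 1" "c dvd int p"
    have "P ^ F = int p ^ (l * F)" unfolding P_def by (simp add: power_mult)
    moreover have "l * F \<ge> 1" using assms(2) F1 by simp
    ultimately have "int p dvd P ^ F" by (metis dvd_power le_numeral_extra(2) not_one_le_zero order_less_le_trans zero_less_one le_less_trans less_le_trans nat_less_le  dvd_power_le dvd_refl)
    hence "c dvd P ^ F" using c(2) dvd_trans by blast
    hence "c dvd P ^ F - (P ^ F - 1)" using c(1) dvd_diff by blast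
    thus "is_unit c" by simp
  qed
  have cop2: "coprime (int p + 1) (int p)"
  proof (rule coprimeI)
    fix c assume c: "c dvd int p + 1" "c dvd int p"
    hence "c dvd (int p + 1) - int p" using dvd_diff by blast
    thus "is_unit c" by simp
  qed
  have copM0: "coprime M0 (int p)" unfolding M0_def using cop1 cop2 aF(2) by simp
  have copM: "coprime M (int p)" unfolding M_def using copM0 cDp by simp
  have M1: "M > 1"
  proof -
    have "int F' \<ge> 1" "P ^ F - 1 \<ge> 1" "int D \<ge> 1" using aF(3) PF D0 by auto
    hence "int D * (int F' * (P ^ F - 1)) \<ge> 1" by (intro int_ge1_mult)
    moreover have "int p + 1 \<ge> 2" using p0 by simp
    ultimately have "int D * (int F' * (P ^ F - 1)) * (int p + 1) \<ge> 1 * 2"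
      by (intro mult_mono) auto
    thus ?thesis unfolding M_def M0_def by (simp add: mult.assoc)
  qed
  show "\<exists>M::int. M > 1 \<and> coprime M (int p) \<and> cong_sub p (rho_Gamma \<rho> p l) M \<subseteq> K"
  proof (intro exI[of _ M] conjI M1 copM subsetI)
    fix g assume g: "g \<in> cong_sub p (rho_Gamma \<rho> p l) M"
    hence gL: "g \<in> L" and ent: "\<forall>i j. \<exists>r\<in>Zp_inv p. g$i$j - (mat 1 :: rat^'n^'n)$i$j = of_int M * r"
      unfolding cong_sub_def L_def by auto
    obtain k y where gky: "g = \<rho> (q powi k) y" "y \<in> Zp_inv p"
      using gL unfolding L_def rho_Gamma_def q_def by blast
    define x where "x = q powi k"
    have x0: "x \<noteq> 0" using q0 x_def by simp
    have xZ: "x \<in> Zp_inv p" unfolding x_def q_def by (rule Zp_powi)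
    have g': "g = \<rho> x y" using gky x_def by simp
    have cgA: "\<forall>i j. cg p (int D * M0) (g$i$j) ((mat 1::rat^'n^'n)$i$j)"
    proof (intro allI)
      fix i j
      obtain r where r: "r \<in> Zp_inv p" "g$i$j - (mat 1 :: rat^'n^'n)$i$j = of_int M * r" using ent by blast
      have m1: "(mat 1 :: rat^'n^'n)$i$j \<in> Zp_inv p" by (simp add: mat_def)
      have "g$i$j = (mat 1 :: rat^'n^'n)$i$j + of_int M * r" using r(2) by (simp add: algebra_simps)
      hence "g$i$j \<in> Zp_inv p" using m1 r(1) p0 by (auto intro!: Zp_add Zp_mult)
      thus "cg p (int D * M0) (g$i$j) ((mat 1::rat^'n^'n)$i$j)"
        unfolding cg_def using m1 r M_def by auto
    qed
    have dg: "det g \<noteq> 0" using inv[OF x0] g' invertible_det_nz by metis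
    have psi1I: "\<psi>1 (mat 1) = 1" and psi2I: "\<psi>2 (mat 1) = 0" using psi(3) one by (metis one_neq_zero)+
    obtain s1 where s1: "s1 \<in> Zp_inv p" "x - 1 = of_int M0 * s1"
      using reg_step[OF p0 cD1 D0 R1(2) cgA dg xZ] psi(3) x0 g' psi1I by auto
    obtain s2 where s2: "s2 \<in> Zp_inv p" "y - 0 = of_int M0 * s2"
      using reg_step[OF p0 cD2 D0 R2(2) cgA dg gky(2)] psi(3) x0 g' psi2I by auto
    have "y = of_nat F' * (of_int ((P ^ F - 1) * (int p + 1)) * s2)" using s2(2) unfolding M0_def by simp
    moreover have "of_int ((P ^ F - 1) * (int p + 1)) * s2 \<in> Zp_inv p" by (rule Zp_mult[OF p0 Zp_int s2(1)])
    ultimately have Ky: "\<rho> 1 y \<in> K" using A' by metis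
    have "M0 dvd (int p ^ l) ^ nat \<bar>k\<bar> - 1"
      using key[OF assms(1) _ s1(1) copM0] s1(2) unfolding x_def q_def by blast
    moreover have "(P ^ F - 1) dvd M0" unfolding M0_def by simp
    ultimately have "(P ^ F - 1) dvd P ^ nat \<bar>k\<bar> - 1" unfolding P_def using dvd_trans by blast
    hence "F dvd nat \<bar>k\<bar>" using powdiv[OF P2 F1] by blast
    hence "int F dvd int (nat \<bar>k\<bar>)" by (simp only: int_dvd_int_iff)
    hence "int F dvd \<bar>k\<bar>" by simp
    hence "int F dvd k" by simp
    then obtain s where ks: "k = int F * s" by blast
    have "x = u powi s" unfolding x_def u_def ks by (simp add: power_int_mult)
    hence Kx: "\<rho> x 0 \<in> K" using Bpow by simp
    have "\<rho> 1 y ** \<rho> x 0 = \<rho> x y" using hom[of 1 x y 0] x0 by simp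
    thus "g \<in> K" using Kmul[OF Ky Kx] g' by simp
  qed
qed


end
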